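(* Let $M$ be a compact Polish metric space, let $\bar a=(a_0,\dots,a_{p-1})$ and $\bar b=(b_0,\dots,b_{p-1})$ be tuples from $M$, and let $(A_n:n\in\omega)$ be a sequence of finite subsets of $M$ with $A_n\subseteq A_{n+1}$ and $\bigcup_{z\in A_n}B_{2^{-n}}(z)=M$ for all $n$. Suppose $(\varphi_n:n\in\omega)$ is a compact approximation system for $M,\bar a,\bar b$ with respect to $(A_n:n\in\omega)$. Then there is a bijective isometry $\Phi:M\to M$ with $\Phi(a_i)=b_i$ for all $i<p$.
   Context: $B_r(z)$ denotes the open ball of radius $r$ about $z$. A compact approximation system for $M,\bar a,\bar b$ with respect to $(A_n)$ is a sequence $(\varphi_n:n\in\omega)$ such that for every $n$: (i) $\varphi_n:A_n\to A_n$; (ii) for all $i<p$ and $z\in A_n$, $|d(a_i,z)-d(b_i,\varphi_n(z))|<2^{-n}$; (iii) for all $m\le n$, $y\in A_m$, $z\in A_n$, $|d(y,z)-d(\varphi_m(y),\varphi_n(z))|<2^{-m}+2^{-n}$; (iv) $\bigcup_{z\in A_n}B_{2^{-(n-1)}}(\varphi_n(z))=M$. *)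

theory Defs
  imports "HOL-Analysis.Analysis"
begin

text \<open>The space M is a subset of a metric space type; open balls are taken
  relative to M, so "the union of balls equals M" is rendered as
  "M is contained in the union of (ambient) balls", the centres lying in M.\<close>
definition compact_approx_system ::
  "'a::metric_space set \<Rightarrow> nat \<Rightarrow> (nat \<Rightarrow> 'a) \<Rightarrow> (nat \<Rightarrow> 'a) \<Rightarrow> (nat \<Rightarrow> 'a set)
   \<Rightarrow> (nat \<Rightarrow> 'a \<Rightarrow> 'a) \<Rightarrow> bool" where
  "compact_approx_system M p a b A \<phi> \<longleftrightarrow>
     (\<forall>n. \<phi> n ` A n \<subseteq> A n) \<and>
     (\<forall>n. \<forall>i<p. \<forall>z\<in>A n. \<bar>dist (a i) z - dist (b i) (\<phi> n z)\<bar> < (1/2) ^ n) \<and>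
     (\<forall>n m. m \<le> n \<longrightarrow> (\<forall>y\<in>A m. \<forall>z\<in>A n.
        \<bar>dist y z - dist (\<phi> m y) (\<phi> n z)\<bar> < (1/2) ^ m + (1/2) ^ n)) \<and>
     (\<forall>n. M \<subseteq> (\<Union>z\<in>A n. ball (\<phi> n z) (2 powr (1 - real n))))"

end

theory Submission
  imports Defs
begin

lemma dist_bound_tendsto:
  fixes f :: "nat \<Rightarrow> 'a::metric_space"
  assumes "\<And>n. dist (f n) L \<le> g n" and "g \<longlonglongrightarrow> 0"
  shows "f \<longlonglongrightarrow> L"
proof -
  have "(\<lambda>n. dist (f n) L) \<longlonglongrightarrow> 0"
    by (rule Lim_null_comparison[OF _ assms(2)]) (use assms(1) in simp)
  then show ?thesis by (rule tendsto_dist_iff[THEN iffD2])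
qed

lemma half_pow_tendsto: "(\<lambda>n. c * (1/2::real) ^ n) \<longlonglongrightarrow> 0"
  using tendsto_mult_right_zero[OF LIMSEQ_realpow_zero[of "1/2::real"]] by simp

theorem lemma3p2:
  fixes M :: "'a::metric_space set" and p :: nat
    and a b :: "nat \<Rightarrow> 'a" and A :: "nat \<Rightarrow> 'a set" and \<phi> :: "nat \<Rightarrow> 'a \<Rightarrow> 'a"
  assumes "compact M"
    and "\<forall>i<p. a i \<in> M" and "\<forall>i<p. b i \<in> M"
    and "\<forall>n. finite (A n) \<and> A n \<subseteq> M"
    and "\<forall>n. A n \<subseteq> A (Suc n)"
    and "\<forall>n. M \<subseteq> (\<Union>z\<in>A n. ball z ((1/2) ^ n))"
    and "compact_approx_system M p a b A \<phi>"
  shows "\<exists>\<Phi>. bij_betw \<Phi> M M \<and> (\<forall>x\<in>M. \<forall>y\<in>M. dist (\<Phi> x) (\<Phi> y) = dist x y)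
             \<and> (\<forall>i<p. \<Phi> (a i) = b i)"
proof -
  have AM: "\<And>n. A n \<subseteq> M" using assms(4) by blast
  have phiA: "\<And>n z. z \<in> A n \<Longrightarrow> \<phi> n z \<in> A n"
    using assms(7) unfolding compact_approx_system_def by blast
  have phiM: "\<And>n z. z \<in> A n \<Longrightarrow> \<phi> n z \<in> M" using phiA AM by blast
  have ii: "\<And>n i z. i < p \<Longrightarrow> z \<in> A n \<Longrightarrow> \<bar>dist (a i) z - dist (b i) (\<phi> n z)\<bar> < (1/2) ^ n"
    using assms(7) unfolding compact_approx_system_def by blast
  have iii0: "\<And>n m y z. m \<le> n \<Longrightarrow> y \<in> A m \<Longrightarrow> z \<in> A n \<Longrightarrow>
        \<bar>dist y z - dist (\<phi> m y) (\<phi> n z)\<bar> < (1/2) ^ m + (1/2) ^ n"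
    using assms(7) unfolding compact_approx_system_def by blast
  have iii: "\<And>n m y z. y \<in> A m \<Longrightarrow> z \<in> A n \<Longrightarrow>
        \<bar>dist y z - dist (\<phi> m y) (\<phi> n z)\<bar> < (1/2) ^ m + (1/2) ^ n"
  proof -
    fix n m y z assume y: "y \<in> A m" and z: "z \<in> A n"
    show "\<bar>dist y z - dist (\<phi> m y) (\<phi> n z)\<bar> < (1/2) ^ m + (1/2) ^ n"
    proof (cases "m \<le> n")
      case True then show ?thesis using iii0 y z by blast
    next
      case False
      then have "\<bar>dist z y - dist (\<phi> n z) (\<phi> m y)\<bar> < (1/2) ^ n + (1/2) ^ m"
        using iii0 y z by simp
      then show ?thesis by (simp add: dist_commute add.commute)
    qed
  qed
  have iv: "\<And>n. M \<subseteq> (\<Union>z\<in>A n. ball (\<phi> n z) (2 * (1/2) ^ n))"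
  proof -
    fix n
    have "(2::real) powr (1 - real n) = 2 * (1/2) ^ n"
      by (simp add: powr_diff powr_realpow power_one_over)
    then show "M \<subseteq> (\<Union>z\<in>A n. ball (\<phi> n z) (2 * (1/2) ^ n))"
      using assms(7) unfolding compact_approx_system_def by metis
  qed
  have ex_z: "\<And>x n. x \<in> M \<Longrightarrow> \<exists>z. z \<in> A n \<and> dist x z < (1/2) ^ n"
    using assms(6) by (fastforce simp: subset_eq dist_commute)
  define zz where "zz n x = (SOME z. z \<in> A n \<and> dist x z < (1/2::real) ^ n)" for n x
  have zz: "\<And>x n. x \<in> M \<Longrightarrow> zz n x \<in> A n \<and> dist x (zz n x) < (1/2) ^ n"
    unfolding zz_def using ex_z by (rule someI_ex)
  have cpl: "complete M" using assms(1) compact_imp_complete by blast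
  have conv: "\<exists>l\<in>M. (\<lambda>n. \<phi> n (zz n x)) \<longlonglongrightarrow> l" if x: "x \<in> M" for x
  proof -
    have bnd: "dist (\<phi> m (zz m x)) (\<phi> n (zz n x)) < 2 * (1/2) ^ m + 2 * (1/2) ^ n" for m n
    proof -
      have "dist (zz m x) (zz n x) \<le> dist x (zz m x) + dist x (zz n x)"
        by (rule dist_triangle3)
      also have "\<dots> < (1/2) ^ m + (1/2) ^ n" using zz[OF x, of m] zz[OF x, of n] by simp
      finally have "dist (zz m x) (zz n x) < (1/2) ^ m + (1/2) ^ n" .
      moreover have "\<bar>dist (zz m x) (zz n x) - dist (\<phi> m (zz m x)) (\<phi> n (zz n x))\<bar> < (1/2) ^ m + (1/2) ^ n"
        using iii[of "zz m x" m "zz n x" n] zz[OF x, of m] zz[OF x, of n] by simp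
      ultimately show ?thesis by linarith
    qed
    have "Cauchy (\<lambda>n. \<phi> n (zz n x))"
      unfolding Cauchy_def
    proof (intro allI impI)
      fix e :: real assume "e > 0"
      then obtain N where N: "(1/2::real) ^ N < e / 4" using real_arch_pow_inv[of "e/4" "1/2::real"] by auto
      show "\<exists>N. \<forall>m\<ge>N. \<forall>n\<ge>N. dist (\<phi> m (zz m x)) (\<phi> n (zz n x)) < e"
      proof (intro exI allI impI)
        fix m n assume "m \<ge> N" "n \<ge> N"
        then have "(1/2::real) ^ m \<le> (1/2) ^ N" "(1/2::real) ^ n \<le> (1/2) ^ N"
          by (auto intro: power_decreasing)
        then show "dist (\<phi> m (zz m x)) (\<phi> n (zz n x)) < e" using bnd[of m n] N by linarith
      qed
    qed
    moreover have "\<forall>n. \<phi> n (zz n x) \<in> M" using phiM zz[OF x] by blast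
    ultimately show ?thesis using cpl unfolding complete_def
      by (metis (no_types, lifting))
  qed
  define \<Phi> where "\<Phi> x = lim (\<lambda>n. \<phi> n (zz n x))" for x
  have Phi_lim: "(\<lambda>n. \<phi> n (zz n x)) \<longlonglongrightarrow> \<Phi> x" and PhiM: "\<Phi> x \<in> M" if x: "x \<in> M" for x
  proof -
    obtain l where l: "l \<in> M" "(\<lambda>n. \<phi> n (zz n x)) \<longlonglongrightarrow> l" using conv[OF x] by blast
    then have "\<Phi> x = l" unfolding \<Phi>_def using limI by blast
    then show "(\<lambda>n. \<phi> n (zz n x)) \<longlonglongrightarrow> \<Phi> x" "\<Phi> x \<in> M" using l by auto
  qed
  have key: "(\<lambda>k. \<phi> (r k) (u k)) \<longlonglongrightarrow> \<Phi> x"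
    if x: "x \<in> M" and r: "strict_mono r" and u: "\<And>k. u k \<in> A (r k)" and ul: "u \<longlonglongrightarrow> x" for x r u
  proof -
    have sub: "(\<lambda>k. \<phi> (r k) (zz (r k) x)) \<longlonglongrightarrow> \<Phi> x"
      using LIMSEQ_subseq_LIMSEQ[OF Phi_lim[OF x] r] by (simp add: o_def)
    have d: "dist (\<phi> (r k) (u k)) (\<phi> (r k) (zz (r k) x)) \<le> dist (u k) x + 3 * (1/2) ^ (r k)" for k
    proof -
      have "\<bar>dist (u k) (zz (r k) x) - dist (\<phi> (r k) (u k)) (\<phi> (r k) (zz (r k) x))\<bar> < (1/2) ^ (r k) + (1/2) ^ (r k)"
        using iii[OF u[of k], of "zz (r k) x" "r k"] zz[OF x, of "r k"] by simp
      moreover have "dist (u k) (zz (r k) x) \<le> dist (u k) x + dist x (zz (r k) x)" by (rule dist_triangle)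
      ultimately show ?thesis using zz[OF x, of "r k"] by linarith
    qed
    have g0: "(\<lambda>k. dist (u k) x + 3 * (1/2::real) ^ (r k)) \<longlonglongrightarrow> 0"
    proof -
      have "(\<lambda>k. dist (u k) x) \<longlonglongrightarrow> 0" using ul by (rule tendsto_dist_iff[THEN iffD1])
      moreover have "(\<lambda>k. 3 * (1/2::real) ^ (r k)) \<longlonglongrightarrow> 0"
        using LIMSEQ_subseq_LIMSEQ[OF half_pow_tendsto[of 3] r] by (simp add: o_def)
      ultimately show ?thesis using tendsto_add[of "\<lambda>k. dist (u k) x" 0 sequentially "\<lambda>k. 3 * (1/2::real) ^ (r k)" 0] by simp
    qed
    have s0: "(\<lambda>k. dist (\<phi> (r k) (zz (r k) x)) (\<Phi> x)) \<longlonglongrightarrow> 0"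
      using sub by (rule tendsto_dist_iff[THEN iffD1])
    have g1: "(\<lambda>k. (dist (u k) x + 3 * (1/2::real) ^ (r k)) + dist (\<phi> (r k) (zz (r k) x)) (\<Phi> x)) \<longlonglongrightarrow> 0"
      using tendsto_add[OF g0 s0] by simp
    show ?thesis
    proof (rule dist_bound_tendsto[OF _ g1])
      fix k
      have "dist (\<phi> (r k) (u k)) (\<Phi> x) \<le> dist (\<phi> (r k) (u k)) (\<phi> (r k) (zz (r k) x)) + dist (\<phi> (r k) (zz (r k) x)) (\<Phi> x)"
        by (rule dist_triangle)
      then show "dist (\<phi> (r k) (u k)) (\<Phi> x) \<le> (dist (u k) x + 3 * (1/2::real) ^ (r k)) + dist (\<phi> (r k) (zz (r k) x)) (\<Phi> x)"
        using d[of k] by linarith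
    qed
  qed
  have isom: "dist (\<Phi> x) (\<Phi> y) = dist x y" if x: "x \<in> M" and y: "y \<in> M" for x y
  proof -
    have l1: "(\<lambda>n. dist (\<phi> n (zz n x)) (\<phi> n (zz n y))) \<longlonglongrightarrow> dist (\<Phi> x) (\<Phi> y)"
      by (rule tendsto_dist[OF Phi_lim[OF x] Phi_lim[OF y]])
    have zx: "(\<lambda>n. zz n x) \<longlonglongrightarrow> x"
      by (rule dist_bound_tendsto[OF _ half_pow_tendsto[of 1]]) (use zz[OF x] in \<open>simp add: dist_commute less_imp_le\<close>)
    have zy: "(\<lambda>n. zz n y) \<longlonglongrightarrow> y"
      by (rule dist_bound_tendsto[OF _ half_pow_tendsto[of 1]]) (use zz[OF y] in \<open>simp add: dist_commute less_imp_le\<close>)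
    have l2: "(\<lambda>n. dist (zz n x) (zz n y)) \<longlonglongrightarrow> dist x y" by (rule tendsto_dist[OF zx zy])
    have "(\<lambda>n. dist (\<phi> n (zz n x)) (\<phi> n (zz n y))) \<longlonglongrightarrow> dist x y"
    proof (rule dist_bound_tendsto[OF _ ])
      fix n
      have "\<bar>dist (zz n x) (zz n y) - dist (\<phi> n (zz n x)) (\<phi> n (zz n y))\<bar> < (1/2) ^ n + (1/2) ^ n"
        using iii[of "zz n x" n "zz n y" n] zz[OF x, of n] zz[OF y, of n] by simp
      then show "dist (dist (\<phi> n (zz n x)) (\<phi> n (zz n y))) (dist x y)
          \<le> dist (dist (zz n x) (zz n y)) (dist x y) + 2 * (1/2) ^ n"
        unfolding dist_real_def by linarith
    next
      have "(\<lambda>n. dist (dist (zz n x) (zz n y)) (dist x y)) \<longlonglongrightarrow> 0" using l2 by (rule tendsto_dist_iff[THEN iffD1])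
      then show "(\<lambda>n. dist (dist (zz n x) (zz n y)) (dist x y) + 2 * (1/2::real) ^ n) \<longlonglongrightarrow> 0"
        using tendsto_add[OF _ half_pow_tendsto[of 2]] by simp
    qed
    then show ?thesis using l1 LIMSEQ_unique by metis
  qed
  have fix_a: "\<Phi> (a i) = b i" if i: "i < p" for i
  proof -
    have ai: "a i \<in> M" using assms(2) i by blast
    have "(\<lambda>n. \<phi> n (zz n (a i))) \<longlonglongrightarrow> b i"
    proof (rule dist_bound_tendsto[OF _ half_pow_tendsto[of 2]])
      fix n
      have "\<bar>dist (a i) (zz n (a i)) - dist (b i) (\<phi> n (zz n (a i)))\<bar> < (1/2) ^ n"
        using ii[OF i, of "zz n (a i)" n] zz[OF ai, of n] by simp
      then show "dist (\<phi> n (zz n (a i))) (b i) \<le> 2 * (1/2) ^ n"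
        using zz[OF ai, of n] dist_commute[of "b i" "\<phi> n (zz n (a i))"] by linarith
    qed
    then show ?thesis using Phi_lim[OF ai] LIMSEQ_unique by metis
  qed
  have surj: "w \<in> \<Phi> ` M" if w: "w \<in> M" for w
  proof -
    have "\<exists>v. v \<in> A n \<and> dist (\<phi> n v) w < 2 * (1/2) ^ n" for n
    proof -
      have "w \<in> (\<Union>z\<in>A n. ball (\<phi> n z) (2 * (1/2) ^ n))" using iv[of n] w by blast
      then obtain v where "v \<in> A n" "dist (\<phi> n v) w < 2 * (1/2) ^ n" by (auto simp: mem_ball)
      then show ?thesis by blast
    qed
    then obtain v where v: "\<And>n. v n \<in> A n \<and> dist (\<phi> n (v n)) w < 2 * (1/2) ^ n" by metis
    have "\<forall>n. v n \<in> M" using v AM by blast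
    then obtain x r where x: "x \<in> M" and r: "strict_mono r" and vr: "(v \<circ> r) \<longlonglongrightarrow> x"
      using compact_imp_seq_compact[OF assms(1)] unfolding seq_compact_def by blast
    have k1: "(\<lambda>k. \<phi> (r k) ((v \<circ> r) k)) \<longlonglongrightarrow> \<Phi> x"
      by (rule key[OF x r _ vr]) (use v in simp)
    have k2: "(\<lambda>k. \<phi> (r k) ((v \<circ> r) k)) \<longlonglongrightarrow> w"
    proof (rule dist_bound_tendsto)
      show "(\<lambda>k. 2 * (1/2::real) ^ (r k)) \<longlonglongrightarrow> 0"
        using LIMSEQ_subseq_LIMSEQ[OF half_pow_tendsto[of 2] r] by (simp add: o_def)
      fix k show "dist (\<phi> (r k) ((v \<circ> r) k)) w \<le> 2 * (1/2) ^ (r k)"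
        using v[of "r k"] by simp
    qed
    have "\<Phi> x = w" using k1 k2 LIMSEQ_unique by metis
    then show ?thesis using x by blast
  qed
  have "inj_on \<Phi> M"
  proof (rule inj_onI)
    fix x y assume "x \<in> M" "y \<in> M" "\<Phi> x = \<Phi> y"
    then have "dist x y = 0" using isom[of x y] by simp
    then show "x = y" by simp
  qed
  moreover have "\<Phi> ` M = M" using PhiM surj by blast
  ultimately show ?thesis using isom fix_a unfolding bij_betw_def by blast
qed

end
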